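(* Let $L$ be a positive integer and let $J \subseteq [L]$ be a nonempty subset with $l := |J|$. Then for every $\alpha \in (0,1)$ there exist $j_1, j_2 \in J$ such that (i) $l/2 \le j_1 \le j_2 \le (1+\alpha) j_1$; (ii) $|J \cap [j_1, j_2]| \ge c_\alpha \dfrac{l}{\log(2L/l)}$, where $c_\alpha > 0$ depends only on $\alpha$.
   Context: $[L] = \{1,\ldots,L\}$; $[j_1,j_2]$ denotes the set of integers between $j_1$ and $j_2$. Logarithms are to base $2$. *)

theory Defs
  imports Complex_Main
begin

end

theory Submission
  imports Defs
begin

lemma pigeon:
  assumes "finite A" "A \<noteq> {}" "\<forall>x\<in>A. f x < (K::nat)"
  shows "\<exists>k<K. card A \<le> K * card {x\<in>A. f x = k}"
proof (rule ccontr)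
  assume H: "\<not> ?thesis"
  have Kpos: "K > 0" using assms by auto
  have eq: "A = (\<Union>k\<in>{..<K}. {x\<in>A. f x = k})" using assms(3) by auto
  have "card A = (\<Sum>k\<in>{..<K}. card {x\<in>A. f x = k})"
    by (subst eq, rule card_UN_disjoint) (use assms(1) in auto)
  hence "K * card A = (\<Sum>k\<in>{..<K}. K * card {x\<in>A. f x = k})"
    by (simp add: sum_distrib_left)
  also have "\<dots> < (\<Sum>k\<in>{..<K}. card A)"
    by (rule sum_strict_mono) (use H Kpos in auto)
  also have "\<dots> = K * card A" by simp
  finally show False by simp
qed

theorem lemma3p2:
  fixes \<alpha> :: real
  assumes "0 < \<alpha>" and "\<alpha> < 1"
  shows "\<exists>c>0. \<forall>(L::nat) (J::nat set). L \<ge> 1 \<longrightarrow> J \<subseteq> {1..L} \<longrightarrow> J \<noteq> {} \<longrightarrow>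
    (\<exists>j1\<in>J. \<exists>j2\<in>J.
       real (card J) / 2 \<le> real j1 \<and> j1 \<le> j2 \<and> real j2 \<le> (1 + \<alpha>) * real j1 \<and>
       real (card (J \<inter> {j1..j2})) \<ge> c * real (card J) / log 2 (2 * real L / real (card J)))"
proof -
  define b where "b = 1 + \<alpha>"
  have b1: "1 < b" using assms by (simp add: b_def)
  have lb: "log 2 b > 0" using b1 by simp
  define C where "C = 1 / log 2 b + 1"
  have Cpos: "C > 0" using lb by (simp add: C_def add_pos_pos)
  show ?thesis
  proof (intro exI[of _ "1/(2*C)"] conjI allI impI)
    show "0 < 1/(2*C)" using Cpos by simp
    fix L :: nat and J :: "nat set"
    assume L1: "L \<ge> 1" and JL: "J \<subseteq> {1..L}" and Jne: "J \<noteq> {}"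
    define l where "l = card J"
    have finJ: "finite J" using JL finite_subset by blast
    have l1: "l \<ge> 1" using finJ Jne l_def by (simp add: Suc_le_eq card_gt_0_iff)
    have lL: "l \<le> L" using card_mono[OF _ JL] l_def by simp
    define J' where "J' = {j\<in>J. l \<le> 2*j}"
    have finJ': "finite J'" using finJ J'_def by simp
    have sub: "J - J' \<subseteq> {1..<(l+1) div 2}" using JL by (auto simp: J'_def)
    have "card (J - J') \<le> (l+1) div 2 - 1" using card_mono[OF _ sub] by simp
    moreover have "card (J - J') = l - card J'"
      using card_Diff_subset[OF finJ', of J] l_def by (auto simp: J'_def)
    moreover have "card J' \<le> l" using card_mono[OF finJ, of J'] l_def J'_def by auto
    ultimately have cJ': "l \<le> 2 * card J'" by linarith
    hence J'ne: "J' \<noteq> {}" using l1 by auto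
    define x where "x = 2 * real L / real l"
    have x2: "x \<ge> 2" using lL l1 by (simp add: x_def field_simps)
    define f where "f j = nat \<lfloor>log b (2 * real j / real l)\<rfloor>" for j :: nat
    define K where "K = nat \<lfloor>log b x\<rfloor> + 1"
    have fK: "\<forall>j\<in>J'. f j < K"
    proof
      fix j assume j: "j \<in> J'"
      hence "j \<le> L" "l \<le> 2*j" using JL J'_def by auto
      hence "2 * real j / real l \<le> x" "2 * real j / real l > 0" using l1
        by (auto simp: x_def divide_right_mono)
      hence "log b (2 * real j / real l) \<le> log b x" using b1 by simp
      hence "\<lfloor>log b (2 * real j / real l)\<rfloor> \<le> \<lfloor>log b x\<rfloor>" by (rule floor_mono)
      thus "f j < K" unfolding f_def K_def by linarith
    qed
    obtain k where kK: "k < K" and kc: "card J' \<le> K * card {j\<in>J'. f j = k}"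
      using pigeon[OF finJ' J'ne fK] by blast
    define F where "F = {j\<in>J'. f j = k}"
    have finF: "finite F" using finJ' F_def by simp
    have Fne: "F \<noteq> {}"
    proof
      assume "F = {}"
      hence "card J' = 0" using kc[folded F_def] by simp
      thus False using J'ne finJ' by simp
    qed
    have bnd: "b ^ k \<le> 2 * real j / real l \<and> 2 * real j / real l < b ^ (k+1)" if "j \<in> F" for j
    proof -
      have "l \<le> 2*j" using that F_def J'_def by auto
      hence pos: "2 * real j / real l \<ge> 1" using l1 by (simp add: field_simps)
      hence lg: "log b (2 * real j / real l) \<ge> 0" using b1 by simp
      have fk: "f j = k" using that F_def by simp
      have "real k \<le> log b (2 * real j / real l)" "log b (2 * real j / real l) < real k + 1"
        using fk lg unfolding f_def by linarith+
      hence h1: "b powr real k \<le> 2 * real j / real l" using le_log_iff[OF b1] pos by simp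
      have "\<not> real (k+1) \<le> log b (2 * real j / real l)" using \<open>log b _ < real k + 1\<close> by simp
      hence h2: "\<not> b powr real (k+1) \<le> 2 * real j / real l" using le_log_iff[OF b1] pos by simp
      have b0: "0 < b" using b1 by simp
      show ?thesis using h1 h2 unfolding powr_realpow[OF b0] by simp
    qed
    define j1 where "j1 = Min F"
    define j2 where "j2 = Max F"
    have j1F: "j1 \<in> F" and j2F: "j2 \<in> F" using finF Fne j1_def j2_def by auto
    have FJ: "F \<subseteq> J" using F_def J'_def by auto
    have j12: "j1 \<le> j2" using finF Fne j1_def j2_def by simp
    have Fsub: "F \<subseteq> J \<inter> {j1..j2}" using FJ finF j1_def j2_def by auto
    have cF: "card F \<le> card (J \<inter> {j1..j2})" using card_mono[OF _ Fsub] finJ by simp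
    have lpos: "real l > 0" using l1 by simp
    have "real j2 < real l / 2 * b ^ (k+1)" using bnd[OF j2F] lpos by (simp add: field_simps)
    also have "\<dots> = b * (real l / 2 * b ^ k)" by simp
    also have "\<dots> \<le> b * real j1" using bnd[OF j1F] lpos b1 by (simp add: field_simps)
    finally have j2b: "real j2 \<le> (1+\<alpha>) * real j1" by (simp add: b_def)
    have j1l: "real l / 2 \<le> real j1" using j1F F_def J'_def by auto
    have lx: "log 2 x \<ge> 1" using x2 by simp
    have "real K \<le> log b x + 1"
      using b1 x2 unfolding K_def by (simp add: of_nat_nat)
    also have "log b x = log 2 x / log 2 b" by (simp add: log_base_change)
    also have "log 2 x / log 2 b + 1 \<le> C * log 2 x"
      using lx lb by (simp add: C_def algebra_simps)
    finally have KC: "real K \<le> C * log 2 x" .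
    have Kpos: "real K > 0" using kK by simp
    have "real l \<le> 2 * (real K * real (card F))"
    proof -
      have "l \<le> 2*(K*card F)" using cJ' kc[folded F_def] by linarith
      hence "real l \<le> real (2*(K*card F))" by (simp only: of_nat_le_iff)
      thus ?thesis by simp
    qed
    hence "real l / (2 * C * log 2 x) \<le> real (card F)"
    proof -
      assume h: "real l \<le> 2 * (real K * real (card F))"
      have "real l \<le> 2 * (C * log 2 x * real (card F))"
      proof -
        have "real K * real (card F) \<le> C * log 2 x * real (card F)"
          using KC by (rule mult_right_mono) simp
        thus ?thesis using h by linarith
      qed
      thus ?thesis using Cpos lx by (simp add: field_simps)
    qed
    hence "1/(2*C) * real l / log 2 x \<le> real (card (J \<inter> {j1..j2}))"
      using cF by (simp add: field_simps)
    thus "\<exists>j1\<in>J. \<exists>j2\<in>J.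
       real (card J) / 2 \<le> real j1 \<and> j1 \<le> j2 \<and> real j2 \<le> (1 + \<alpha>) * real j1 \<and>
       real (card (J \<inter> {j1..j2})) \<ge> 1/(2*C) * real (card J) / log 2 (2 * real L / real (card J))"
      using j1F j2F FJ j12 j2b j1l unfolding l_def x_def by blast
  qed
qed

end
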